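(* Let $\mathcal{H}$, $\mathcal{F}$, $v_f$ and the greedy scheme be as in the context, with constant $c\ge 1$ and non-negative convex penalty $w$, and let $f^\star$ be any element of the Hilbert space. Then for every $m\ge 1$, $$\|f^\star-f_m\|^2+w(v_m)\le \inf_{f\in\mathcal{F}}\Big\{\|f^\star-f\|^2+w(cv_f)+\frac{4b_f}{m}\Big\},\qquad b_f=c^2v_f^2+2v_f\|f^\star\|(c+1)-\|f\|^2 .$$ Moreover, $$\|f^\star-f_m\|^2+w(v_m)\le \inf_{f\in\mathcal{F}}\inf_{\delta>0}\Big\{(1+\delta)\|f^\star-f\|^2+w(cv_f)+\frac{4(1+\delta)\delta^{-1}(c+1)^2v_f^2}{m}\Big\},$$ and consequently $$\|f^\star-f_m\|^2+w(v_m)\le \inf_{f\in\mathcal{F}}\Big\{\Big(\|f^\star-f\|+\frac{2(c+1)v_f}{\sqrt m}\Big)^2+w(cv_f)\Big\}.$$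
   Context: Let $(\mathcal{V},\langle\cdot,\cdot\rangle)$ be a real Hilbert space with norm $\|\cdot\|$ (in the paper, $L^2(P)$ for a probability measure $P$ on $[-1,1]^d$). Let $\mathcal{H}\subset\mathcal{V}$ be a dictionary with $\|h\|\le 1$ for all $h\in\mathcal{H}$, $\mathcal{H}=-\mathcal{H}$ and $0\in\mathcal{H}$. Let $\mathcal{F}$ be the set of finite combinations $f=\sum_{h\in\mathcal{H}}\beta_h h$ with $\beta_h\ge 0$, and for $f\in\mathcal{F}$ let $v_f=\inf\{\sum_h\beta_h : f=\sum_h\beta_h h,\ \beta_h\ge0\}$. Let $w:\mathbb{R}\to[0,\infty)$ be convex and $c\ge1$. Greedy scheme: $f_0=0$, $v_0=0$. For $m=1,2,\dots$: choose $h_m\in\mathcal{H}$ with $\langle h_m,f^\star-f_{m-1}\rangle\ge \frac1c\sup_{h\in\mathcal{H}}\langle h,f^\star-f_{m-1}\rangle$; then choose $\alpha_m\in[0,1]$ and $\beta_{m,m}\ge0$ attaining $\inf_{\alpha\in[0,1],\beta\ge0}\big[\|f^\star-(1-\alpha)f_{m-1}-\beta h_m\|^2+w((1-\alpha)v_{m-1}+\beta)\big]$, and set $f_m=(1-\alpha_m)f_{m-1}+\beta_{m,m}h_m$, $v_m=(1-\alpha_m)v_{m-1}+\beta_{m,m}$. *)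

theory Defs
  imports "HOL-Analysis.Analysis"
begin

definition dict_reps :: "'a::real_vector set \<Rightarrow> 'a \<Rightarrow> ('a set \<times> ('a \<Rightarrow> real)) set" where
  "dict_reps H f = {(S, beta). finite S \<and> S \<subseteq> H \<and> (\<forall>h\<in>S. beta h \<ge> 0)
                      \<and> f = (\<Sum>h\<in>S. beta h *\<^sub>R h)}"

definition dict_cone :: "'a::real_vector set \<Rightarrow> 'a set" where
  "dict_cone H = {f. dict_reps H f \<noteq> {}}"

definition var_norm :: "'a::real_vector set \<Rightarrow> 'a \<Rightarrow> real" where
  "var_norm H f = Inf ((\<lambda>(S, beta). \<Sum>h\<in>S. beta h) ` dict_reps H f)"

end

theory Submission
  imports Defs
begin

lemma norm_sq_comb:
  fixes x y :: "'a::real_inner"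
  shows "(norm (x + y))\<^sup>2 = (norm x)\<^sup>2 + 2 * inner x y + (norm y)\<^sup>2"
  by (simp add: power2_norm_eq_inner inner_add_left inner_add_right inner_commute)

lemma convex_sq:
  fixes r u :: "'a::real_inner"
  assumes "0 \<le> a" "a \<le> 1"
  shows "(norm ((1-a) *\<^sub>R r + a *\<^sub>R u))\<^sup>2 \<le> (1-a)*(norm r)\<^sup>2 + a*(norm u)\<^sup>2"
proof -
  have e: "(norm ((1-a) *\<^sub>R r + a *\<^sub>R u))\<^sup>2 = (1-a)\<^sup>2*(norm r)\<^sup>2 + 2*(a*(1-a))*inner r u + a\<^sup>2*(norm u)\<^sup>2"
    unfolding norm_sq_comb norm_scaleR inner_scaleR_left inner_scaleR_right power_mult_distrib power2_abs
    by (simp add: algebra_simps)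
  have hh: "(norm (r - u))\<^sup>2 = (norm r)\<^sup>2 - 2 * inner r u + (norm u)\<^sup>2"
    using norm_sq_comb[of r "-u"] by simp
  have "2 * inner r u \<le> (norm r)\<^sup>2 + (norm u)\<^sup>2"
    using hh zero_le_power2[of "norm (r - u)"] by linarith
  hence "2*(a*(1-a))*inner r u \<le> (a*(1-a))*((norm r)\<^sup>2 + (norm u)\<^sup>2)"
    using assms by (metis mult.assoc mult.commute mult_left_mono mult_nonneg_nonneg diff_ge_0_iff_ge)
  thus ?thesis unfolding e by (simp add: power2_eq_square algebra_simps)
qed

lemma alg1:
  fixes r u z :: "'a::real_inner"
  assumes "inner r z \<le> 0" "0 \<le> a" "a \<le> 1"
  shows "(norm ((1-a) *\<^sub>R r + a *\<^sub>R (u + z)))\<^sup>2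
     \<le> (1-a)*(norm r)\<^sup>2 + a*(1-a)*(norm u)\<^sup>2 + a\<^sup>2*(norm (u+z))\<^sup>2"
proof -
  have e: "(norm ((1-a) *\<^sub>R r + a *\<^sub>R (u+z)))\<^sup>2 = (1-a)\<^sup>2*(norm r)\<^sup>2 + 2*(a*(1-a))*(inner r u + inner r z) + a\<^sup>2*(norm (u+z))\<^sup>2"
    unfolding norm_sq_comb[of "(1-a) *\<^sub>R r"] norm_scaleR inner_scaleR_left inner_scaleR_right power_mult_distrib power2_abs inner_add_right
    by (simp add: algebra_simps)
  have hh: "(norm (r - u))\<^sup>2 = (norm r)\<^sup>2 - 2 * inner r u + (norm u)\<^sup>2"
    using norm_sq_comb[of r "-u"] by simp
  have "2 * inner r u \<le> (norm r)\<^sup>2 + (norm u)\<^sup>2"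
    using hh zero_le_power2[of "norm (r - u)"] by linarith
  hence "2 * (inner r u + inner r z) \<le> (norm r)\<^sup>2 + (norm u)\<^sup>2" using assms(1) by (simp add: distrib_left)
  hence "(a*(1-a))*(2 * (inner r u + inner r z)) \<le> (a*(1-a))*((norm r)\<^sup>2 + (norm u)\<^sup>2)"
    using assms by (intro mult_left_mono) auto
  thus ?thesis unfolding e by (simp add: power2_eq_square algebra_simps)
qed

lemma alg2:
  fixes r u z :: "'a::real_inner"
  assumes "inner r z \<le> 0" "0 \<le> a" "a \<le> 1" "norm z \<le> K" "d > 0"
  shows "(norm ((1-a) *\<^sub>R r + a *\<^sub>R (u + z)))\<^sup>2
     \<le> (1-a)*(norm r)\<^sup>2 + a*(1+d)*(norm u)\<^sup>2 + a\<^sup>2*(K\<^sup>2*(1+1/d))"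
proof -
  have eq: "(1-a) *\<^sub>R r + a *\<^sub>R (u + z) = ((1-a) *\<^sub>R r + a *\<^sub>R u) + a *\<^sub>R z"
    by (simp add: algebra_simps)
  have e: "(norm ((1-a) *\<^sub>R r + a *\<^sub>R (u+z)))\<^sup>2 = (norm ((1-a) *\<^sub>R r + a *\<^sub>R u))\<^sup>2
       + 2*(a*(1-a))*inner r z + 2*a\<^sup>2*inner u z + a\<^sup>2*(norm z)\<^sup>2"
    unfolding eq norm_sq_comb by (simp add: inner_add_left power2_eq_square algebra_simps)
  have K0: "0 \<le> K" using assms(4) norm_ge_zero order_trans by blast
  have c1: "2*(a*(1-a))*inner r z \<le> 0" using assms by (intro mult_nonneg_nonpos) auto
  have iu: "inner u z \<le> norm u * K"
    using norm_cauchy_schwarz[of u z] assms(4) by (meson mult_left_mono norm_ge_zero order_trans)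
  have "2*a\<^sup>2*inner u z \<le> 2*a\<^sup>2*(norm u * K)" using iu by (simp add: mult_left_mono)
  also have "\<dots> \<le> a*d*(norm u)\<^sup>2 + a^3*K\<^sup>2/d"
  proof -
    have "0 \<le> (a/d) * (d*norm u - a*K)\<^sup>2" using assms by simp
    moreover have "(a/d) * (d*norm u - a*K)\<^sup>2 = a*d*(norm u)\<^sup>2 + a^3*K\<^sup>2/d - 2*a\<^sup>2*(norm u * K)"
      using assms(5) by (simp add: field_simps power2_eq_square power3_eq_cube)
    ultimately show ?thesis by linarith
  qed
  also have "a^3*K\<^sup>2/d \<le> a\<^sup>2*K\<^sup>2/d"
  proof -
    have "a^3 \<le> a^2" using assms by (simp add: power3_eq_cube power2_eq_square mult_left_le)
    thus ?thesis using assms(5) by (simp add: divide_right_mono mult_right_mono)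
  qed
  hence "a*d*(norm u)\<^sup>2 + a^3*K\<^sup>2/d \<le> a*d*(norm u)\<^sup>2 + a\<^sup>2*K\<^sup>2/d" by simp
  finally have c2: "2*a\<^sup>2*inner u z \<le> a*d*(norm u)\<^sup>2 + a\<^sup>2*K\<^sup>2/d" .
  have c3: "a\<^sup>2*(norm z)\<^sup>2 \<le> a\<^sup>2*K\<^sup>2"
    using assms(4) by (intro mult_left_mono power_mono) auto
  note c4 = convex_sq[OF assms(2,3), of r u]
  have "a\<^sup>2*K\<^sup>2/d = a\<^sup>2*(K\<^sup>2/d)" by simp
  show ?thesis unfolding e using c1 c2 c3 c4
    by (simp add: algebra_simps add_divide_distrib)
qed

lemma alg_ineq: "(x::real) \<ge> 1 \<Longrightarrow> (1 - 2/(x+1)) * (4/x) + (2/(x+1))\<^sup>2 \<le> 4/(x+1)"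
proof -
  assume x: "x \<ge> 1"
  define a where "a = 1/x"
  define b where "b = 1/(x+1)"
  have p: "0 < x" "0 < x + 1" using x by auto
  have ab: "a - b = a*b" unfolding a_def b_def using p by (simp add: field_simps)
  have ba: "b \<le> a" unfolding a_def b_def using p by (simp add: frac_le)
  have b0: "0 \<le> b" unfolding b_def using p by simp
  have "b*b \<le> a*b" using ba b0 by (rule mult_right_mono)
  moreover have "(1 - 2/(x+1)) * (4/x) + (2/(x+1))\<^sup>2 = (1 - 2*b)*(4*a) + 4*(b*b)"
    unfolding a_def b_def by (simp add: power2_eq_square)
  moreover have "4/(x+1) = 4*b" unfolding b_def by simp
  ultimately show ?thesis using ab by (simp add: algebra_simps)
qed

lemma rec_bound:
  fixes a :: "nat \<Rightarrow> real"
  assumes step: "\<And>m t. m \<ge> 1 \<Longrightarrow> 0 \<le> t \<Longrightarrow> t \<le> 1 \<Longrightarrow> a m \<le> (1-t) * a (m-1) + t\<^sup>2 * B"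
    and B: "B \<ge> 0" and m: "m \<ge> 1"
  shows "a m \<le> 4 * B / real m"
  using m
proof (induction m rule: dec_induct)
  case base
  then show ?case using step[of 1 1] B by simp
next
  case (step m)
  let ?t = "2 / real (Suc m)"
  have t0: "0 \<le> ?t" and t1: "?t \<le> 1" using step.hyps by auto
  have "a (Suc m) \<le> (1 - ?t) * a m + ?t\<^sup>2 * B" using assms(1)[of "Suc m" ?t] t0 t1 by simp
  also have "\<dots> \<le> (1 - ?t) * (4*B/real m) + ?t\<^sup>2 * B"
    using step.IH t1 by (intro add_right_mono mult_left_mono) auto
  also have "\<dots> \<le> 4*B/real (Suc m)"
  proof -
    have mpos: "real m \<ge> 1" using step.hyps by simp
    note alg = alg_ineq
    have "(1 - ?t) * (4/real m) + ?t\<^sup>2 \<le> 4/real (Suc m)"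
      using alg[OF mpos] by (simp add: add.commute)
    hence "((1 - ?t) * (4/real m) + ?t\<^sup>2) * B \<le> 4/real (Suc m) * B" using B by (rule mult_right_mono)
    thus ?thesis by (simp add: algebra_simps)
  qed
  finally show ?case .
qed
lemma sup_props:
  fixes H :: "'a::real_inner set"
  assumes H_norm: "\<forall>g\<in>H. norm g \<le> 1" and H_zero: "0 \<in> H"
  shows "bdd_above ((\<lambda>h. inner h r) ` H)" "\<And>h. h \<in> H \<Longrightarrow> inner h r \<le> (SUP h\<in>H. inner h r)"
    "0 \<le> (SUP h\<in>H. inner h r)"
proof -
  show b: "bdd_above ((\<lambda>h. inner h r) ` H)"
  proof (rule bdd_aboveI2)
    fix h assume "h \<in> H"
    have "inner h r \<le> norm h * norm r" by (rule norm_cauchy_schwarz)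
    also have "\<dots> \<le> 1 * norm r" using H_norm \<open>h \<in> H\<close> by (intro mult_right_mono) auto
    finally show "inner h r \<le> norm r" by simp
  qed
  show u: "\<And>h. h \<in> H \<Longrightarrow> inner h r \<le> (SUP h\<in>H. inner h r)"
    using b by (rule cSUP_upper2) auto
  show "0 \<le> (SUP h\<in>H. inner h r)" using u[OF H_zero] by simp
qed

lemma var_norm_props:
  fixes H :: "'a::real_inner set"
  assumes H_norm: "\<forall>g\<in>H. norm g \<le> 1" and H_zero: "0 \<in> H" and g: "g \<in> dict_cone H"
  shows "0 \<le> var_norm H g" "norm g \<le> var_norm H g"
    "inner g r \<le> var_norm H g * (SUP h\<in>H. inner h r)"
proof -
  let ?T = "(\<lambda>(S, beta). \<Sum>h\<in>S. beta h) ` dict_reps H g"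
  let ?s = "(SUP h\<in>H. inner h r)"
  have ne: "?T \<noteq> {}" using g unfolding dict_cone_def by auto
  have props: "0 \<le> t \<and> norm g \<le> t \<and> inner g r \<le> t * ?s" if "t \<in> ?T" for t
  proof -
    obtain S beta where rep: "(S, beta) \<in> dict_reps H g" and t: "t = (\<Sum>h\<in>S. beta h)"
      using \<open>t \<in> ?T\<close> by auto
    have fin: "finite S" and SH: "S \<subseteq> H" and bp: "\<forall>h\<in>S. beta h \<ge> 0"
      and geq: "g = (\<Sum>h\<in>S. beta h *\<^sub>R h)" using rep unfolding dict_reps_def by auto
    have "0 \<le> t" unfolding t using bp by (simp add: sum_nonneg)
    moreover have "norm g \<le> t"
    proof -
      have "norm g \<le> (\<Sum>h\<in>S. norm (beta h *\<^sub>R h))" unfolding geq by (rule norm_sum)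
      also have "\<dots> \<le> (\<Sum>h\<in>S. beta h)"
      proof (rule sum_mono)
        fix h assume "h \<in> S"
        hence "norm h \<le> 1" "beta h \<ge> 0" using SH H_norm bp by auto
        thus "norm (beta h *\<^sub>R h) \<le> beta h" by (simp add: mult_left_le)
      qed
      finally show ?thesis unfolding t .
    qed
    moreover have "inner g r \<le> t * ?s"
    proof -
      have "inner g r = (\<Sum>h\<in>S. beta h * inner h r)" unfolding geq by (simp add: inner_sum_left)
      also have "\<dots> \<le> (\<Sum>h\<in>S. beta h * ?s)"
      proof (rule sum_mono)
        fix h assume "h \<in> S"
        thus "beta h * inner h r \<le> beta h * ?s"
          using SH bp sup_props(2)[OF H_norm H_zero, of h r] by (intro mult_left_mono) auto
      qed
      also have "\<dots> = t * ?s" unfolding t by (simp add: sum_distrib_right)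
      finally show ?thesis .
    qed
    ultimately show ?thesis by blast
  qed
  show "0 \<le> var_norm H g" unfolding var_norm_def using ne props by (intro cInf_greatest) auto
  show "norm g \<le> var_norm H g" unfolding var_norm_def using ne props by (intro cInf_greatest) auto
  have s0: "0 \<le> ?s" by (rule sup_props(3)[OF H_norm H_zero])
  show "inner g r \<le> var_norm H g * ?s"
  proof (cases "?s = 0")
    case True
    obtain t where "t \<in> ?T" using ne by blast
    thus ?thesis using props[of t] True by simp
  next
    case False
    hence sp: "?s > 0" using s0 by simp
    have "inner g r / ?s \<le> var_norm H g" unfolding var_norm_def
      using ne props sp by (intro cInf_greatest) (auto simp: pos_divide_le_eq)
    thus ?thesis using sp by (simp add: pos_divide_le_eq mult.commute)
  qed
qed

lemma B1_bound:
  fixes fs g h :: "'a::real_inner"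
  assumes "norm h \<le> 1" "norm g \<le> V" "0 \<le> V" "c \<ge> 1"
  shows "(norm (fs - (c*V) *\<^sub>R h))\<^sup>2 - (norm (fs - g))\<^sup>2
     \<le> c\<^sup>2 * V\<^sup>2 + 2 * V * norm fs * (c + 1) - (norm g)\<^sup>2"
proof -
  have e1: "(norm (fs - (c*V) *\<^sub>R h))\<^sup>2 = (norm fs)\<^sup>2 - 2*(c*V)*inner fs h + (c*V)\<^sup>2*(norm h)\<^sup>2"
    unfolding power2_norm_eq_inner inner_diff_left inner_diff_right inner_scaleR_left inner_scaleR_right
    by (simp add: inner_commute power2_eq_square algebra_simps)
  have e2: "(norm (fs - g))\<^sup>2 = (norm fs)\<^sup>2 - 2*inner fs g + (norm g)\<^sup>2"
    by (simp add: power2_norm_eq_inner inner_diff_left inner_diff_right inner_commute algebra_simps)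
  have cv: "0 \<le> c*V" using assms by simp
  have "- inner fs h \<le> norm fs" using norm_cauchy_schwarz[of fs "-h"] assms(1)
    by (smt (verit) inner_minus_right mult_left_le norm_ge_zero norm_minus_cancel)
  hence i1: "- (2*(c*V)*inner fs h) \<le> 2*(c*V)*norm fs" using cv
    by (metis mult_left_mono mult_minus_right mult_nonneg_nonneg zero_le_numeral)
  have "(norm h)\<^sup>2 \<le> 1" using assms(1) by (simp add: power_le_one)
  hence i2: "(c*V)\<^sup>2*(norm h)\<^sup>2 \<le> c\<^sup>2*V\<^sup>2" by (metis mult_left_le power_mult_distrib zero_le_power2)
  have "inner fs g \<le> norm fs * V" using norm_cauchy_schwarz[of fs g] assms(2)
    by (meson mult_left_mono norm_ge_zero order_trans)
  hence i3: "2 * inner fs g \<le> 2 * V * norm fs" by (simp add: mult.commute)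
  show ?thesis unfolding e1 e2 using i1 i2 i3 by (simp add: algebra_simps)
qed
lemma p3_eq:
  fixes d K q :: real
  assumes "d > 0" "K > 0" "q > 0"
  shows "(1 + 2*K/(d*q))*d\<^sup>2 + 4*(1 + 2*K/(d*q))*K\<^sup>2/((2*K/(d*q))*q\<^sup>2) = (d + 2*K/q)\<^sup>2"
  using assms by (simp add: field_simps power2_eq_square)
theorem theorem1:
  fixes H :: "'a::{real_inner, complete_space} set"
    and w :: "real \<Rightarrow> real"
    and c :: real
    and fstar :: 'a
    and f :: "nat \<Rightarrow> 'a" and v :: "nat \<Rightarrow> real"
    and h :: "nat \<Rightarrow> 'a" and \<alpha> :: "nat \<Rightarrow> real" and \<beta> :: "nat \<Rightarrow> real"
  assumes H_norm: "\<forall>g\<in>H. norm g \<le> 1"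
    and H_sym: "uminus ` H = H"
    and H_zero: "0 \<in> H"
    and w_convex: "convex_on UNIV w"
    and w_nonneg: "\<forall>x. w x \<ge> 0"
    and c_ge: "c \<ge> 1"
    and f0: "f 0 = 0" and v0: "v 0 = 0"
    and h_mem: "\<And>m. m \<ge> 1 \<Longrightarrow> h m \<in> H"
    and h_greedy: "\<And>m. m \<ge> 1 \<Longrightarrow>
          inner (h m) (fstar - f (m - 1)) \<ge> (1 / c) * (SUP g\<in>H. inner g (fstar - f (m - 1)))"
    and \<alpha>_range: "\<And>m. m \<ge> 1 \<Longrightarrow> \<alpha> m \<in> {0..1}"
    and \<beta>_nonneg: "\<And>m. m \<ge> 1 \<Longrightarrow> \<beta> m \<ge> 0"
    and opt: "\<And>m a b. m \<ge> 1 \<Longrightarrow> a \<in> {0..1} \<Longrightarrow> b \<ge> 0 \<Longrightarrow>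
          (norm (fstar - (1 - \<alpha> m) *\<^sub>R f (m - 1) - \<beta> m *\<^sub>R h m))\<^sup>2
            + w ((1 - \<alpha> m) * v (m - 1) + \<beta> m)
          \<le> (norm (fstar - (1 - a) *\<^sub>R f (m - 1) - b *\<^sub>R h m))\<^sup>2
            + w ((1 - a) * v (m - 1) + b)"
    and f_step: "\<And>m. m \<ge> 1 \<Longrightarrow> f m = (1 - \<alpha> m) *\<^sub>R f (m - 1) + \<beta> m *\<^sub>R h m"
    and v_step: "\<And>m. m \<ge> 1 \<Longrightarrow> v m = (1 - \<alpha> m) * v (m - 1) + \<beta> m"
  shows "\<forall>m\<ge>1.
     (\<forall>g\<in>dict_cone H.
        (norm (fstar - f m))\<^sup>2 + w (v m)
          \<le> (norm (fstar - g))\<^sup>2 + w (c * var_norm H g)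
             + 4 * (c\<^sup>2 * (var_norm H g)\<^sup>2 + 2 * var_norm H g * norm fstar * (c + 1)
                    - (norm g)\<^sup>2) / real m)
   \<and> (\<forall>g\<in>dict_cone H. \<forall>\<delta>>0.
        (norm (fstar - f m))\<^sup>2 + w (v m)
          \<le> (1 + \<delta>) * (norm (fstar - g))\<^sup>2 + w (c * var_norm H g)
             + 4 * (1 + \<delta>) * (c + 1)\<^sup>2 * (var_norm H g)\<^sup>2 / (\<delta> * real m))
   \<and> (\<forall>g\<in>dict_cone H.
        (norm (fstar - f m))\<^sup>2 + w (v m)
          \<le> (norm (fstar - g) + 2 * (c + 1) * var_norm H g / sqrt (real m))\<^sup>2
             + w (c * var_norm H g))"
  proof -
  have cpos: "c > 0" using c_ge by simp
  define e where "e m = (norm (fstar - f m))\<^sup>2 + w (v m)" for m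
  have main: "(\<forall>m\<ge>1. e m \<le> (norm (fstar - g))\<^sup>2 + w (c * var_norm H g)
             + 4 * (c\<^sup>2 * (var_norm H g)\<^sup>2 + 2 * var_norm H g * norm fstar * (c + 1)
                    - (norm g)\<^sup>2) / real m)
     \<and> (\<forall>m\<ge>1. \<forall>\<delta>>0. e m \<le> (1 + \<delta>) * (norm (fstar - g))\<^sup>2 + w (c * var_norm H g)
             + 4 * (((c+1) * var_norm H g)\<^sup>2 * (1 + 1/\<delta>)) / real m)
     \<and> (\<forall>m\<ge>1. e m \<le> (norm (fstar - g) + 2 * (c + 1) * var_norm H g / sqrt (real m))\<^sup>2
             + w (c * var_norm H g))"
    if g: "g \<in> dict_cone H" for g
  proof -
    define V where "V = var_norm H g"
    have V0: "0 \<le> V" and gV: "norm g \<le> V" and gi: "\<And>r. inner g r \<le> V * (SUP h\<in>H. inner h r)"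
      using var_norm_props[OF H_norm H_zero g] by (auto simp: V_def)
    define z where "z m = g - (c*V) *\<^sub>R h m" for m
    define d where "d = norm (fstar - g)"
    define W where "W = w (c*V)"
    define K where "K = (c+1)*V"
    have hn: "norm (h m) \<le> 1" if "m \<ge> 1" for m using H_norm h_mem[OF that] by auto
    have rz: "inner (fstar - f (m-1)) (z m) \<le> 0" if m: "m \<ge> 1" for m
    proof -
      let ?r = "fstar - f (m-1)"
      let ?s = "SUP h\<in>H. inner h ?r"
      have "(1/c) * ?s \<le> inner (h m) ?r" using h_greedy[OF m] .
      hence "?s \<le> c * inner (h m) ?r" using cpos by (simp add: field_simps)
      hence "V * ?s \<le> V * (c * inner (h m) ?r)" using V0 by (rule mult_left_mono)
      moreover have "inner ?r (z m) = inner g ?r - (c*V) * inner (h m) ?r"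
        unfolding z_def by (simp add: inner_diff_right inner_diff_left inner_commute algebra_simps)
      ultimately show ?thesis using gi[of ?r] by (simp add: algebra_simps)
    qed
    have nz: "norm (z m) \<le> K" if m: "m \<ge> 1" for m
    proof -
      have "norm (z m) \<le> norm g + norm ((c*V) *\<^sub>R h m)" unfolding z_def by (rule norm_triangle_ineq4)
      also have "norm ((c*V) *\<^sub>R h m) \<le> c*V"
        using hn[OF m] V0 cpos by (simp add: mult_left_le)
      finally show ?thesis using gV unfolding K_def by (simp add: algebra_simps)
    qed
    have uz: "(fstar - g) + z m = fstar - (c*V) *\<^sub>R h m" for m unfolding z_def by simp
    have step: "e m \<le> (norm ((1-a) *\<^sub>R (fstar - f (m-1)) + a *\<^sub>R ((fstar - g) + z m)))\<^sup>2
                 + ((1-a) * w (v (m-1)) + a * W)"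
      if m: "m \<ge> 1" and a0: "0 \<le> a" and a1: "a \<le> 1" for m a
    proof -
      have b0: "0 \<le> a * (c*V)" using a0 cpos V0 by simp
      have "e m = (norm (fstar - (1 - \<alpha> m) *\<^sub>R f (m - 1) - \<beta> m *\<^sub>R h m))\<^sup>2
            + w ((1 - \<alpha> m) * v (m - 1) + \<beta> m)"
        unfolding e_def f_step[OF m] v_step[OF m] by (simp add: algebra_simps)
      also have "\<dots> \<le> (norm (fstar - (1 - a) *\<^sub>R f (m - 1) - (a*(c*V)) *\<^sub>R h m))\<^sup>2
            + w ((1 - a) * v (m - 1) + a*(c*V))"
        using opt[OF m _ b0] a0 a1 by simp
      also have "fstar - (1 - a) *\<^sub>R f (m - 1) - (a*(c*V)) *\<^sub>R h m
          = (1-a) *\<^sub>R (fstar - f (m-1)) + a *\<^sub>R ((fstar - g) + z m)"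
        unfolding uz by (simp add: algebra_simps)
      also have "w ((1 - a) * v (m - 1) + a*(c*V)) \<le> (1-a) * w (v (m-1)) + a * W"
        using convex_onD[OF w_convex a0 a1, of "v (m-1)" "c*V"] unfolding W_def by simp
      finally show ?thesis by simp
    qed
    define B1 where "B1 = c\<^sup>2 * V\<^sup>2 + 2 * V * norm fstar * (c + 1) - (norm g)\<^sup>2"
    have B1pos: "0 \<le> B1"
    proof -
      have "(norm g)\<^sup>2 \<le> V\<^sup>2" using gV by (simp add: power_mono)
      also have "V\<^sup>2 \<le> c\<^sup>2 * V\<^sup>2" using c_ge by (simp add: mult_le_cancel_right1 power_le_one_iff one_le_power)
      moreover have "0 \<le> 2 * V * norm fstar * (c + 1)" using V0 c_ge by simp
      ultimately show ?thesis unfolding B1_def by linarith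
    qed
    have P1: "e m - (d\<^sup>2 + W) \<le> 4 * B1 / real m" if "m \<ge> 1" for m
    proof (rule rec_bound[where a="\<lambda>m. e m - (d\<^sup>2 + W)", OF _ B1pos that])
      fix k :: nat and t :: real assume k: "1 \<le> k" and t0: "0 \<le> t" and t1: "t \<le> 1"
      let ?r = "fstar - f (k-1)"
      have A: "e k \<le> (1-t)*(norm ?r)\<^sup>2 + t*(1-t)*d\<^sup>2 + t\<^sup>2*(norm ((fstar-g) + z k))\<^sup>2 + ((1-t)*w (v (k-1)) + t*W)"
        using step[OF k t0 t1] alg1[OF rz[OF k] t0 t1, of "fstar - g"] unfolding d_def by linarith
      have "(norm ((fstar-g) + z k))\<^sup>2 \<le> d\<^sup>2 + B1"
        using B1_bound[OF hn[OF k] gV V0 c_ge, of fstar] unfolding uz d_def B1_def by simp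
      hence Bb: "t\<^sup>2*(norm ((fstar-g) + z k))\<^sup>2 \<le> t\<^sup>2*(d\<^sup>2 + B1)" by (rule mult_left_mono) simp
      have e1: "e (k-1) = (norm ?r)\<^sup>2 + w (v (k-1))" by (simp add: e_def)
      have eq: "(1-t)*(norm ?r)\<^sup>2 + t*(1-t)*d\<^sup>2 + t\<^sup>2*(d\<^sup>2 + B1) + ((1-t)*w (v (k-1)) + t*W) - (d\<^sup>2 + W)
          = (1-t)*(e (k-1) - (d\<^sup>2 + W)) + t\<^sup>2*B1"
        unfolding e1 by (simp add: algebra_simps power2_eq_square)
      show "e k - (d\<^sup>2 + W) \<le> (1-t)*(e (k-1) - (d\<^sup>2 + W)) + t\<^sup>2*B1"
        using A Bb eq by linarith
    qed
    have P2: "e m - ((1+\<delta>)*d\<^sup>2 + W) \<le> 4 * (K\<^sup>2*(1+1/\<delta>)) / real m" if m: "m \<ge> 1" and dp: "\<delta> > 0" for m \<delta>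
    proof (rule rec_bound[where a="\<lambda>m. e m - ((1+\<delta>)*d\<^sup>2 + W)", OF _ _ m])
      show "0 \<le> K\<^sup>2*(1+1/\<delta>)" using dp by simp
      fix k :: nat and t :: real assume k: "1 \<le> k" and t0: "0 \<le> t" and t1: "t \<le> 1"
      let ?r = "fstar - f (k-1)"
      have A: "e k \<le> (1-t)*(norm ?r)\<^sup>2 + t*(1+\<delta>)*d\<^sup>2 + t\<^sup>2*(K\<^sup>2*(1+1/\<delta>)) + ((1-t)*w (v (k-1)) + t*W)"
        using step[OF k t0 t1] alg2[OF rz[OF k] t0 t1 nz[OF k] dp, of "fstar - g"] unfolding d_def by linarith
      have e1: "e (k-1) = (norm ?r)\<^sup>2 + w (v (k-1))" by (simp add: e_def)
      have eq: "(1-t)*(norm ?r)\<^sup>2 + t*(1+\<delta>)*d\<^sup>2 + t\<^sup>2*(K\<^sup>2*(1+1/\<delta>)) + ((1-t)*w (v (k-1)) + t*W) - ((1+\<delta>)*d\<^sup>2 + W)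
          = (1-t)*(e (k-1) - ((1+\<delta>)*d\<^sup>2 + W)) + t\<^sup>2*(K\<^sup>2*(1+1/\<delta>))"
        unfolding e1 by (simp add: algebra_simps)
      show "e k - ((1+\<delta>)*d\<^sup>2 + W) \<le> (1-t)*(e (k-1) - ((1+\<delta>)*d\<^sup>2 + W)) + t\<^sup>2*(K\<^sup>2*(1+1/\<delta>))"
        using A eq by linarith
    qed
    have P3: "e m \<le> (d + 2 * K / sqrt (real m))\<^sup>2 + W" if m: "m \<ge> 1" for m
    proof -
      define q where "q = sqrt (real m)"
      have q0: "q > 0" unfolding q_def using m by simp
      have qm: "real m = q\<^sup>2" unfolding q_def by simp
      show ?thesis
      proof (cases "V = 0")
        case True
        hence "g = 0" using gV by simp
        hence "B1 = 0" unfolding B1_def using True by simp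
        thus ?thesis using P1[OF m] True unfolding K_def by simp
      next
        case False
        hence Vp: "V > 0" using V0 by simp
        hence Kp: "K > 0" unfolding K_def using cpos by simp
        show ?thesis
        proof (cases "d = 0")
          case True
          hence fg: "fstar = g" unfolding d_def by simp
          have "(c*V)\<^sup>2 \<le> ((c+1)*V - norm g)\<^sup>2"
            using gV V0 cpos by (intro power_mono) (auto simp: algebra_simps)
          hence "B1 \<le> K\<^sup>2" unfolding B1_def K_def fg power2_eq_square by (simp add: algebra_simps)
          hence "4 * B1 / real m \<le> 4 * K\<^sup>2 / real m" using m by (simp add: divide_right_mono)
          moreover have "(d + 2 * K / sqrt (real m))\<^sup>2 = 4 * K\<^sup>2 / real m"
            using True q0 unfolding q_def[symmetric] qm by (simp add: power_divide)
          ultimately show ?thesis using P1[OF m] True by simp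
        next
          case False
          hence dp: "d > 0" unfolding d_def by simp
          define \<delta> where "\<delta> = 2*K/(d*q)"
          have \<delta>p: "\<delta> > 0" unfolding \<delta>_def using dp Kp q0 by simp
          have "4 * (K\<^sup>2*(1+1/\<delta>)) / real m = 4*(1+\<delta>)*K\<^sup>2/(\<delta>*q\<^sup>2)"
            unfolding qm using \<delta>p q0 by (simp add: field_simps)
          hence "(1+\<delta>)*d\<^sup>2 + 4 * (K\<^sup>2*(1+1/\<delta>)) / real m = (d + 2*K/q)\<^sup>2"
            using p3_eq[OF dp Kp q0] unfolding \<delta>_def by simp
          thus ?thesis using P2[OF m \<delta>p] unfolding q_def by simp
        qed
      qed
    qed
    show ?thesis
    proof (intro conjI allI impI)
      fix m :: nat assume m: "1 \<le> m"
      show "e m \<le> (norm (fstar - g))\<^sup>2 + w (c * var_norm H g)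
             + 4 * (c\<^sup>2 * (var_norm H g)\<^sup>2 + 2 * var_norm H g * norm fstar * (c + 1)
                    - (norm g)\<^sup>2) / real m"
        using P1[OF m] unfolding B1_def d_def W_def V_def by simp
      show "e m \<le> (norm (fstar - g) + 2 * (c + 1) * var_norm H g / sqrt (real m))\<^sup>2
             + w (c * var_norm H g)"
        using P3[OF m] unfolding K_def d_def W_def V_def by (simp only: mult.assoc)
    next
      fix m :: nat and \<delta> :: real assume m: "1 \<le> m" and dp: "\<delta> > 0"
      show "e m \<le> (1 + \<delta>) * (norm (fstar - g))\<^sup>2 + w (c * var_norm H g)
             + 4 * (((c+1) * var_norm H g)\<^sup>2 * (1 + 1/\<delta>)) / real m"
        using P2[OF m dp] unfolding K_def d_def W_def V_def by simp
    qed
  qed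
  show ?thesis
    apply (intro allI impI conjI ballI)
    subgoal premises p for m g
      using main[OF p(2)] p(1) unfolding e_def by blast
    subgoal premises p for m g \<delta>
    proof -
      have "e m \<le> (1 + \<delta>) * (norm (fstar - g))\<^sup>2 + w (c * var_norm H g)
             + 4 * (((c+1) * var_norm H g)\<^sup>2 * (1 + 1/\<delta>)) / real m"
        using main[OF p(2)] p by blast
      moreover have "4 * (((c+1) * var_norm H g)\<^sup>2 * (1 + 1/\<delta>)) / real m
          = 4 * (1 + \<delta>) * (c + 1)\<^sup>2 * (var_norm H g)\<^sup>2 / (\<delta> * real m)"
        using p by (simp add: field_simps power2_eq_square)
      ultimately show ?thesis unfolding e_def by simp
    qed
    subgoal premises p for m g
      using main[OF p(2)] p(1) unfolding e_def by blast
    done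
qed

end
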